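(* Let $R$ be an $F$-finite $F$-pure ring of prime characteristic $p$ and $\mathfrak a,J$ ideals with $\mathfrak a\subseteq\sqrt J$. Then $\operatorname{ct}_J(\mathfrak a)=c^J(\mathfrak a)$ if and only if $c^{J_e}(\mathfrak a)=c^{J^{[p^e]}}(\mathfrak a)$ for every $e\in\mathbb N$.
   Context: $J_e=\{f\in R\mid \varphi(f^{1/p^e})\in J \text{ for all }\varphi\in\operatorname{Hom}_R(R^{1/p^e},R)\}$; $b^J_{\mathfrak a}(p^e)=\max\{t\in\mathbb N\mid\mathfrak a^t\not\subseteq J_e\}$ and $\operatorname{ct}_J(\mathfrak a)=\lim_e b^J_{\mathfrak a}(p^e)/p^e$. For ideals $\mathfrak a\subseteq\sqrt{\mathfrak b}$, $\nu^{\mathfrak b}_{\mathfrak a}(p^e)=\max\{m\in\mathbb N\mid\mathfrak a^m\not\subseteq\mathfrak b^{[p^e]}\}$ and $c^{\mathfrak b}(\mathfrak a)=\lim_e\nu^{\mathfrak b}_{\mathfrak a}(p^e)/p^e$; $J^{[p^e]}$ is the ideal generated by $p^e$-th powers of elements of $J$. *)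

theory Defs
  imports "HOL-Analysis.Analysis"
begin

definition is_ideal :: "'a::comm_ring_1 set \<Rightarrow> bool" where
  "is_ideal I \<longleftrightarrow> 0 \<in> I \<and> (\<forall>x\<in>I. \<forall>y\<in>I. x + y \<in> I) \<and> (\<forall>r. \<forall>x\<in>I. r * x \<in> I)"

definition ideal_gen :: "'a::comm_ring_1 set \<Rightarrow> 'a set" where
  "ideal_gen S = \<Inter>{I. is_ideal I \<and> S \<subseteq> I}"

fun ideal_pow :: "'a::comm_ring_1 set \<Rightarrow> nat \<Rightarrow> 'a set" where
  "ideal_pow a 0 = UNIV"
| "ideal_pow a (Suc m) = ideal_gen {x * y | x y. x \<in> a \<and> y \<in> ideal_pow a m}"

definition radical :: "'a::comm_ring_1 set \<Rightarrow> 'a set" where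
  "radical J = {x. \<exists>n. x ^ n \<in> J}"

definition frob_pow :: "'a::comm_ring_1 set \<Rightarrow> nat \<Rightarrow> 'a set" where
  "frob_pow J q = ideal_gen {x ^ q | x. x \<in> J}"

definition noetherian_ring :: "'a::comm_ring_1 itself \<Rightarrow> bool" where
  "noetherian_ring _ \<longleftrightarrow> (\<forall>I::'a set. is_ideal I \<longrightarrow> (\<exists>S. finite S \<and> I = ideal_gen S))"

text \<open>F-finite: F_*R (R with r acting by r^p) is a finitely generated R-module.\<close>
definition F_finite :: "'a::comm_ring_1 itself \<Rightarrow> nat \<Rightarrow> bool" where
  "F_finite _ p \<longleftrightarrow> (\<exists>S::'a set. finite S \<and> (\<forall>x. \<exists>c. x = (\<Sum>s\<in>S. c s ^ p * s)))"

text \<open>F-pure: the Frobenius R \<rightarrow> F_*R, r \<mapsto> r^p, is a pure map of R-modules,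
  expressed through the (standard) finite-linear-systems characterisation of purity.\<close>
definition F_pure :: "'a::comm_ring_1 itself \<Rightarrow> nat \<Rightarrow> bool" where
  "F_pure _ p \<longleftrightarrow> (\<forall>(n::nat) (m::nat) (A::nat \<Rightarrow> nat \<Rightarrow> 'a) (b::nat \<Rightarrow> 'a).
     (\<exists>y. \<forall>i<n. (\<Sum>j<m. A i j ^ p * y j) = b i ^ p) \<longrightarrow>
     (\<exists>x. \<forall>i<n. (\<Sum>j<m. A i j * x j) = b i))"

text \<open>Hom_R(R^{1/q}, R), identifying R^{1/q} with F^e_*R: additive maps
  with phi(r^q x) = r phi(x).  phi(f^{1/q}) corresponds to phi f.\<close>
definition frob_hom :: "nat \<Rightarrow> ('a::comm_ring_1 \<Rightarrow> 'a) \<Rightarrow> bool" where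
  "frob_hom q \<phi> \<longleftrightarrow> (\<forall>x y. \<phi> (x + y) = \<phi> x + \<phi> y) \<and> (\<forall>r x. \<phi> (r ^ q * x) = r * \<phi> x)"

definition J_e :: "'a::comm_ring_1 set \<Rightarrow> nat \<Rightarrow> nat \<Rightarrow> 'a set" where
  "J_e J p e = {f. \<forall>\<phi>. frob_hom (p ^ e) \<phi> \<longrightarrow> \<phi> f \<in> J}"

text \<open>b^J_a(p^e) and nu^b_a(p^e); max of an empty set is read as 0 (Sup on nat).\<close>
definition bJ :: "'a::comm_ring_1 set \<Rightarrow> 'a set \<Rightarrow> nat \<Rightarrow> nat \<Rightarrow> nat" where
  "bJ J a p e = Sup {t. \<not> ideal_pow a t \<subseteq> J_e J p e}"

definition nu :: "'a::comm_ring_1 set \<Rightarrow> 'a set \<Rightarrow> nat \<Rightarrow> nat \<Rightarrow> nat" where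
  "nu b a p e = Sup {m. \<not> ideal_pow a m \<subseteq> frob_pow b (p ^ e)}"

definition ct :: "'a::comm_ring_1 set \<Rightarrow> 'a set \<Rightarrow> nat \<Rightarrow> real" where
  "ct J a p = lim (\<lambda>e. real (bJ J a p e) / real p ^ e)"

definition fthr :: "'a::comm_ring_1 set \<Rightarrow> 'a set \<Rightarrow> nat \<Rightarrow> real" where
  "fthr b a p = lim (\<lambda>e. real (nu b a p e) / real p ^ e)"

end

theory Submission imports Defs "HOL-Computational_Algebra.Primes" begin

lemma frob_add:
  fixes x y :: "'a::comm_ring_1"
  assumes "prime CHAR('a)"
  shows "(x + y) ^ CHAR('a) = x ^ CHAR('a) + y ^ CHAR('a)"
proof -
  let ?p = "CHAR('a)"
  have p0: "?p > 0" using assms prime_gt_0_nat by blast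
  have "(x + y) ^ ?p = (\<Sum>k\<le>?p. of_nat (?p choose k) * x ^ k * y ^ (?p - k))"
    by (rule binomial_ring)
  also have "\<dots> = (\<Sum>k\<in>{0, ?p}. of_nat (?p choose k) * x ^ k * y ^ (?p - k))"
  proof (rule sum.mono_neutral_right)
    show "\<forall>k\<in>{..?p} - {0, ?p}. of_nat (?p choose k) * x ^ k * y ^ (?p - k) = 0"
    proof
      fix k assume k: "k \<in> {..?p} - {0, ?p}"
      have "?p dvd (?p choose k)" using k assms p0 by (intro dvd_choose_prime) auto
      then have "of_nat (?p choose k) = (0::'a)" by (simp add: of_nat_eq_0_iff_char_dvd)
      then show "of_nat (?p choose k) * x ^ k * y ^ (?p - k) = 0" by simp
    qed
  qed auto
  also have "\<dots> = x ^ ?p + y ^ ?p" using p0 by (simp add: add.commute)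
  finally show ?thesis .
qed

lemma frob_add_pow:
  fixes x y :: "'a::comm_ring_1"
  assumes "prime CHAR('a)"
  shows "(x + y) ^ (CHAR('a) ^ e) = x ^ (CHAR('a) ^ e) + y ^ (CHAR('a) ^ e)"
proof (induction e)
  case 0 then show ?case by simp
next
  case (Suc e)
  have "(x + y) ^ (CHAR('a) ^ Suc e) = ((x + y) ^ (CHAR('a) ^ e)) ^ CHAR('a)"
    by (simp add: power_mult[symmetric] mult.commute)
  also have "\<dots> = (x ^ (CHAR('a) ^ e)) ^ CHAR('a) + (y ^ (CHAR('a) ^ e)) ^ CHAR('a)"
    using Suc frob_add[OF assms] by simp
  also have "\<dots> = x ^ (CHAR('a) ^ Suc e) + y ^ (CHAR('a) ^ Suc e)"
    by (simp add: power_mult[symmetric] mult.commute)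
  finally show ?case .
qed

lemma ideal_gen_ideal: "is_ideal (ideal_gen S)"
  unfolding ideal_gen_def is_ideal_def by auto

lemma ideal_gen_sub: "S \<subseteq> ideal_gen S"
  unfolding ideal_gen_def by auto

lemma ideal_gen_in: "x \<in> S \<Longrightarrow> x \<in> ideal_gen S"
  using ideal_gen_sub by (rule subsetD)

lemma ideal_gen_least: "is_ideal I \<Longrightarrow> S \<subseteq> I \<Longrightarrow> ideal_gen S \<subseteq> I"
  unfolding ideal_gen_def by auto

lemma ideal_gen_mono: "S \<subseteq> T \<Longrightarrow> ideal_gen S \<subseteq> ideal_gen T"
  by (meson ideal_gen_ideal ideal_gen_least ideal_gen_sub order_trans)

lemma ideal_gen_idem: "is_ideal I \<Longrightarrow> ideal_gen I = I"
  by (simp add: ideal_gen_least ideal_gen_sub subset_antisym)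

lemma ideal_zero: "is_ideal I \<Longrightarrow> 0 \<in> I" unfolding is_ideal_def by auto
lemma ideal_add: "is_ideal I \<Longrightarrow> x \<in> I \<Longrightarrow> y \<in> I \<Longrightarrow> x + y \<in> I" unfolding is_ideal_def by auto
lemma ideal_mult: "is_ideal I \<Longrightarrow> x \<in> I \<Longrightarrow> r * x \<in> I" unfolding is_ideal_def by auto
lemma ideal_mult2: "is_ideal I \<Longrightarrow> x \<in> I \<Longrightarrow> x * r \<in> I" unfolding is_ideal_def by (metis mult.commute)
lemma ideal_one: "is_ideal I \<Longrightarrow> 1 \<in> I \<Longrightarrow> I = UNIV"
  using ideal_mult by (metis UNIV_eq_I mult.right_neutral)

lemma ideal_sum: "is_ideal I \<Longrightarrow> (\<And>i. i \<in> A \<Longrightarrow> f i \<in> I) \<Longrightarrow> sum f A \<in> I"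
  by (induction A rule: infinite_finite_induct) (auto simp: ideal_zero ideal_add)

lemma ideal_pow_ideal: "is_ideal (ideal_pow a n)"
  by (cases n) (simp_all only: ideal_pow.simps ideal_gen_ideal, simp add: is_ideal_def)

lemma ideal_pow_Suc_sub: "ideal_pow a (Suc n) \<subseteq> ideal_pow a n"
  by (simp only: ideal_pow.simps, rule ideal_gen_least[OF ideal_pow_ideal]) (auto intro: ideal_mult ideal_pow_ideal)

lemma ideal_pow_anti: "m \<le> n \<Longrightarrow> ideal_pow a n \<subseteq> ideal_pow a m"
  by (induction n rule: dec_induct) (use ideal_pow_Suc_sub in blast)+

lemma ideal_pow_1: "is_ideal a \<Longrightarrow> ideal_pow a 1 = a"
  apply simp
  apply (rule subset_antisym)
   apply (rule ideal_gen_least, simp, auto intro: ideal_mult2)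
  by (metis (mono_tags, lifting) UNIV_I ideal_gen_sub mem_Collect_eq mult.right_neutral subsetD)

lemma ideal_pow_mult:
  "x \<in> ideal_pow a m \<Longrightarrow> y \<in> ideal_pow a n \<Longrightarrow> x * y \<in> ideal_pow a (m + n)"
proof (induction m arbitrary: x)
  case 0 then show ?case by (simp add: ideal_mult ideal_pow_ideal)
next
  case (Suc m)
  let ?I = "{x. x * y \<in> ideal_pow a (Suc m + n)}"
  have "is_ideal ?I"
    unfolding is_ideal_def using ideal_pow_ideal[of a "Suc m + n"]
    by (auto simp: distrib_right ideal_zero ideal_add mult.assoc ideal_mult)
  moreover have "{u * v |u v. u \<in> a \<and> v \<in> ideal_pow a m} \<subseteq> ?I"
  proof safe
    fix u v assume "u \<in> a" "v \<in> ideal_pow a m"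
    then have "v * y \<in> ideal_pow a (m + n)" using Suc.IH Suc.prems(2) by blast
    then have "u * (v * y) \<in> ideal_pow a (Suc m + n)"
      using \<open>u \<in> a\<close> by (auto intro!: ideal_gen_sub[THEN subsetD])
    then show "u * v * y \<in> ideal_pow a (Suc m + n)" by (simp add: mult.assoc)
  qed
  ultimately have "ideal_pow a (Suc m) \<subseteq> ?I" by (simp add: ideal_gen_least)
  then show ?case using Suc.prems(1) by blast
qed

lemma ideal_pow_power: "x \<in> ideal_pow a m \<Longrightarrow> x ^ k \<in> ideal_pow a (k * m)"
  by (induction k) (auto simp: ideal_pow_mult)

lemma elem_pow: "is_ideal a \<Longrightarrow> x \<in> a \<Longrightarrow> x ^ k \<in> ideal_pow a k"
  using ideal_pow_power[of x a 1 k] ideal_pow_1 by auto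

lemma frob_gen:
  assumes "prime CHAR('a)" and "(x::'a::comm_ring_1) \<in> ideal_gen S"
  shows "x ^ (CHAR('a) ^ e) \<in> ideal_gen {s ^ (CHAR('a) ^ e) | s. s \<in> S}"
proof -
  let ?q = "CHAR('a) ^ e"
  let ?G = "ideal_gen {s ^ ?q | s. s \<in> S}"
  let ?I = "{x. x ^ ?q \<in> ?G}"
  have "CHAR('a) > 0" using assms(1) prime_gt_0_nat by blast
  then have q0: "?q > 0" by simp
  have G: "is_ideal ?G" by (rule ideal_gen_ideal)
  have "is_ideal ?I"
    unfolding is_ideal_def
  proof (intro conjI ballI allI)
    have "(0::'a) ^ ?q = 0" using q0 by (simp add: power_0_left)
    then show "0 \<in> ?I" using ideal_zero[OF G] by simp
    fix x y assume "x \<in> ?I" "y \<in> ?I"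
    then have h: "x ^ ?q + y ^ ?q \<in> ?G" using ideal_add[OF G] by blast
    have eq: "(x + y) ^ ?q = x ^ ?q + y ^ ?q" by (rule frob_add_pow[OF assms(1)])
    show "x + y \<in> ?I" by (rule CollectI, subst eq, rule h)
  next
    fix r x assume "x \<in> ?I"
    then have h: "r ^ ?q * x ^ ?q \<in> ?G" using ideal_mult[OF G] by blast
    have eq: "(r * x) ^ ?q = r ^ ?q * x ^ ?q" by (rule power_mult_distrib)
    show "r * x \<in> ?I" by (rule CollectI, subst eq, rule h)
  qed
  moreover have "S \<subseteq> ?I"
  proof
    fix s assume "s \<in> S"
    then have "s ^ ?q \<in> {s ^ ?q | s. s \<in> S}" by blast
    then have "s ^ ?q \<in> ?G" by (rule ideal_gen_in)
    then show "s \<in> ?I" by (simp only: mem_Collect_eq)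
  qed
  ultimately have "ideal_gen S \<subseteq> ?I" by (rule ideal_gen_least)
  then show ?thesis using assms(2) by blast
qed

lemma frob_pow_ideal: "is_ideal (frob_pow B q)"
  unfolding frob_pow_def by (rule ideal_gen_ideal)

lemma frob_pow_1: "is_ideal B \<Longrightarrow> frob_pow B 1 = B"
  unfolding frob_pow_def by (simp add: ideal_gen_idem)

lemma frob_pow_mono: "B \<subseteq> B' \<Longrightarrow> frob_pow B q \<subseteq> frob_pow B' q"
  unfolding frob_pow_def by (rule ideal_gen_mono) blast

lemma frob_pow_elem: "x \<in> B \<Longrightarrow> x ^ q \<in> frob_pow B q"
  unfolding frob_pow_def by (rule ideal_gen_in) blast

lemma frob_gen_eq:
  assumes "prime CHAR('a)"
  shows "frob_pow (ideal_gen (S::'a::comm_ring_1 set)) (CHAR('a) ^ e) = ideal_gen {s ^ (CHAR('a) ^ e) | s. s \<in> S}"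
proof (rule subset_antisym)
  show "frob_pow (ideal_gen S) (CHAR('a) ^ e) \<subseteq> ideal_gen {s ^ (CHAR('a) ^ e) | s. s \<in> S}"
    unfolding frob_pow_def
    by (rule ideal_gen_least[OF ideal_gen_ideal]) (use frob_gen[OF assms] in blast)
  show "ideal_gen {s ^ (CHAR('a) ^ e) | s. s \<in> S} \<subseteq> frob_pow (ideal_gen S) (CHAR('a) ^ e)"
    unfolding frob_pow_def by (rule ideal_gen_mono) (auto intro: ideal_gen_in)
qed

lemma frob_pow_comp:
  assumes "prime CHAR('a)"
  shows "frob_pow (frob_pow (B::'a::comm_ring_1 set) (CHAR('a) ^ e)) (CHAR('a) ^ f) = frob_pow B (CHAR('a) ^ (e + f))"
proof -
  have "frob_pow (frob_pow B (CHAR('a) ^ e)) (CHAR('a) ^ f)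
     = ideal_gen {s ^ (CHAR('a) ^ f) | s. s \<in> {x ^ (CHAR('a) ^ e) | x. x \<in> B}}"
    unfolding frob_pow_def[of B] by (rule frob_gen_eq[OF assms])
  also have "{s ^ (CHAR('a) ^ f) | s. s \<in> {x ^ (CHAR('a) ^ e) | x. x \<in> B}} = {x ^ (CHAR('a) ^ (e + f)) | x. x \<in> B}"
  proof -
    have eq: "(x ^ (CHAR('a) ^ e)) ^ (CHAR('a) ^ f) = x ^ (CHAR('a) ^ (e + f))" for x :: 'a
      by (simp only: power_add power_mult)
    show ?thesis unfolding eq[symmetric] by blast
  qed
  finally show ?thesis unfolding frob_pow_def .
qed

lemma frob_hom_zero: "frob_hom q \<phi> \<Longrightarrow> \<phi> 0 = 0"
  unfolding frob_hom_def by (metis add_cancel_right_right add_0)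

lemma J_e_ideal:
  fixes J :: "'a::comm_ring_1 set"
  assumes J: "is_ideal J" shows "is_ideal (J_e J p e)"
  unfolding is_ideal_def
proof (intro conjI ballI allI)
  show "0 \<in> J_e J p e" unfolding J_e_def
  proof clarify
    fix \<phi> :: "'a \<Rightarrow> 'a" assume "frob_hom (p ^ e) \<phi>"
    then show "\<phi> 0 \<in> J" using frob_hom_zero ideal_zero[OF J] by metis
  qed
  fix x y assume x: "x \<in> J_e J p e" and y: "y \<in> J_e J p e"
  show "x + y \<in> J_e J p e" unfolding J_e_def
  proof clarify
    fix \<phi> :: "'a \<Rightarrow> 'a" assume f: "frob_hom (p ^ e) \<phi>"
    then have "\<phi> (x + y) = \<phi> x + \<phi> y" unfolding frob_hom_def by blast
    moreover have "\<phi> x \<in> J" "\<phi> y \<in> J" using x y f unfolding J_e_def by blast+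
    ultimately show "\<phi> (x + y) \<in> J" using J ideal_add by metis
  qed
next
  fix r x assume x: "x \<in> J_e J p e"
  show "r * x \<in> J_e J p e" unfolding J_e_def
  proof clarify
    fix \<phi> :: "'a \<Rightarrow> 'a" assume f: "frob_hom (p ^ e) \<phi>"
    have "frob_hom (p ^ e) (\<lambda>y. \<phi> (r * y))"
      using f unfolding frob_hom_def by (metis distrib_left mult.left_commute)
    then show "\<phi> (r * x) \<in> J" using x unfolding J_e_def by auto
  qed
qed

lemma frob_sub_J_e:
  fixes J :: "'a::comm_ring_1 set"
  assumes J: "is_ideal J" shows "frob_pow J (p ^ e) \<subseteq> J_e J p e"
  unfolding frob_pow_def
proof (rule ideal_gen_least[OF J_e_ideal[OF J]], clarify)
  fix x assume x: "x \<in> J"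
  show "x ^ (p ^ e) \<in> J_e J p e" unfolding J_e_def
  proof clarify
    fix \<phi> :: "'a \<Rightarrow> 'a" assume "frob_hom (p ^ e) \<phi>"
    then have "\<phi> (x ^ (p ^ e) * 1) = x * \<phi> 1" unfolding frob_hom_def by blast
    then show "\<phi> (x ^ (p ^ e)) \<in> J" using ideal_mult2[OF J x] by simp
  qed
qed

lemma J_e_frob_sub:
  assumes "prime CHAR('a)" "is_ideal (J::'a::comm_ring_1 set)"
  shows "frob_pow (J_e J CHAR('a) e) (CHAR('a) ^ f) \<subseteq> J_e J CHAR('a) (e + f)"
  unfolding frob_pow_def
proof (rule ideal_gen_least[OF J_e_ideal[OF assms(2)]], clarify)
  fix x assume x: "x \<in> J_e J CHAR('a) e"
  show "x ^ (CHAR('a) ^ f) \<in> J_e J CHAR('a) (e + f)" unfolding J_e_def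
  proof clarify
    fix \<phi> :: "'a \<Rightarrow> 'a" assume f: "frob_hom (CHAR('a) ^ (e + f)) \<phi>"
    have "frob_hom (CHAR('a) ^ e) (\<lambda>y. \<phi> (y ^ (CHAR('a) ^ f)))"
      unfolding frob_hom_def
    proof (intro conjI allI)
      fix u v :: 'a
      show "\<phi> ((u + v) ^ CHAR('a) ^ f) = \<phi> (u ^ CHAR('a) ^ f) + \<phi> (v ^ CHAR('a) ^ f)"
        using f unfolding frob_hom_def by (simp add: frob_add_pow[OF assms(1)])
      have "(u ^ CHAR('a) ^ e * v) ^ CHAR('a) ^ f = u ^ CHAR('a) ^ (e + f) * v ^ CHAR('a) ^ f"
        by (simp add: power_mult_distrib power_add power_mult)
      then show "\<phi> ((u ^ CHAR('a) ^ e * v) ^ CHAR('a) ^ f) = u * \<phi> (v ^ CHAR('a) ^ f)"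
        using f unfolding frob_hom_def by simp
    qed
    then show "\<phi> (x ^ (CHAR('a) ^ f)) \<in> J" using x unfolding J_e_def by auto
  qed
qed


definition lin_comb :: "'b set \<Rightarrow> ('b \<Rightarrow> 'a::comm_ring_1) \<Rightarrow> 'a set" where
  "lin_comb T f = {y. \<exists>c. y = (\<Sum>t\<in>T. c t * f t)}"

lemma lin_combI: "y = (\<Sum>t\<in>T. c t * f t) \<Longrightarrow> y \<in> lin_comb T f"
  unfolding lin_comb_def by blast

lemma lin_combE: "y \<in> lin_comb T f \<Longrightarrow> (\<And>c. y = (\<Sum>t\<in>T. c t * f t) \<Longrightarrow> P) \<Longrightarrow> P"
  unfolding lin_comb_def by blast

lemma gen_sum_ideal: "is_ideal (lin_comb T f)"
  unfolding is_ideal_def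
proof (intro conjI ballI allI)
  have "(0::'a) = (\<Sum>t\<in>T. (\<lambda>_. 0) t * f t)" by simp
  then show "0 \<in> lin_comb T f" by (rule lin_combI)
  fix x y assume "x \<in> lin_comb T f" "y \<in> lin_comb T f"
  then obtain c d where "x = (\<Sum>t\<in>T. c t * f t)" "y = (\<Sum>t\<in>T. d t * f t)" by (auto elim!: lin_combE)
  then have "x + y = (\<Sum>t\<in>T. (c t + d t) * f t)" by (simp add: sum.distrib distrib_right)
  then show "x + y \<in> lin_comb T f" by (rule lin_combI)
next
  fix r x assume "x \<in> lin_comb T f"
  then obtain c where "x = (\<Sum>t\<in>T. c t * f t)" by (auto elim!: lin_combE)
  then have "r * x = (\<Sum>t\<in>T. (r * c t) * f t)" by (simp add: sum_distrib_left mult.assoc)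
  then show "r * x \<in> lin_comb T f" by (rule lin_combI)
qed

lemma gen_sum:
  fixes f :: "'b \<Rightarrow> 'a::comm_ring_1"
  assumes "finite T"
  shows "ideal_gen (f ` T) \<subseteq> lin_comb T f"
proof (rule ideal_gen_least[OF gen_sum_ideal], rule image_subsetI)
  fix t assume t: "t \<in> T"
  have "(\<Sum>s\<in>T. (if s = t then 1 else 0) * f s) = (\<Sum>s\<in>T. if s = t then f s else 0)"
    by (rule sum.cong) auto
  also have "\<dots> = f t" using assms t by simp
  finally have "f t = (\<Sum>s\<in>T. (\<lambda>s. if s = t then 1 else 0) s * f s)" by simp
  then show "f t \<in> lin_comb T f" by (rule lin_combI)
qed

lemma gen_sum_mem:
  assumes "T \<subseteq> I" "is_ideal I"
  shows "(\<Sum>t\<in>T. c t * t) \<in> I"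
proof (rule ideal_sum[OF assms(2)])
  fix t assume "t \<in> T"
  with assms(1) have "t \<in> I" by (rule subsetD)
  then show "c t * t \<in> I" by (rule ideal_mult[OF assms(2)])
qed

lemma frob_closure:
  fixes K :: "'a::comm_ring_1 set"
  assumes pr: "prime CHAR('a)" and noeth: "noetherian_ring TYPE('a)"
    and fp: "F_pure TYPE('a) CHAR('a)" and K: "is_ideal K"
    and x: "x ^ CHAR('a) \<in> frob_pow K CHAR('a)"
  shows "x \<in> K"
proof -
  let ?P = "CHAR('a)"
  obtain T where T: "finite T" "K = ideal_gen T" using noeth K unfolding noetherian_ring_def by blast
  have "frob_pow K (?P ^ 1) = ideal_gen {t ^ (?P ^ 1) | t. t \<in> T}"
    using T(2) frob_gen_eq[OF pr] by blast
  also have "{t ^ (?P ^ 1) | t. t \<in> T} = (\<lambda>t. t ^ ?P) ` T" by auto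
  finally have "x ^ ?P \<in> ideal_gen ((\<lambda>t. t ^ ?P) ` T)" using x by simp
  with gen_sum[OF T(1), of "\<lambda>t. t ^ ?P"] have "x ^ ?P \<in> lin_comb T (\<lambda>t. t ^ ?P)" by (rule subsetD)
  then obtain c where c: "x ^ ?P = (\<Sum>t\<in>T. c t * t ^ ?P)" by (rule lin_combE)
  obtain h where h: "bij_betw h {0..<card T} T" using ex_bij_betw_nat_finite[OF T(1)] by blast
  have re: "(\<Sum>t\<in>T. g t) = (\<Sum>j<card T. g (h j))" for g :: "'a \<Rightarrow> 'a"
    using sum.reindex_bij_betw[OF h, of g] by (simp add: atLeast0LessThan)
  have ex: "\<exists>y. \<forall>i<1. (\<Sum>j<card T. h j ^ ?P * y j) = x ^ ?P"
    by (rule exI[of _ "\<lambda>j. c (h j)"]) (simp add: c re mult.commute)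
  have "\<exists>z. \<forall>i<(1::nat). (\<Sum>j<card T. h j * z j) = x"
    using fp[unfolded F_pure_def, rule_format, where n=1 and m="card T" and A="\<lambda>i j. h j" and b="\<lambda>i. x", OF ex] .
  then obtain z where "\<forall>i<(1::nat). (\<Sum>j<card T. h j * z j) = x" by blast
  then have "x = (\<Sum>j<card T. h j * z j)" by simp
  also have "\<dots> = (\<Sum>j<card T. z (inv_into {0..<card T} h (h j)) * h j)"
  proof (rule sum.cong[OF refl])
    fix j assume "j \<in> {..<card T}"
    then have "inv_into {0..<card T} h (h j) = j" using h bij_betw_inv_into_left by fastforce
    then show "h j * z j = z (inv_into {0..<card T} h (h j)) * h j" by (simp add: mult.commute)
  qed
  also have "\<dots> = (\<Sum>t\<in>T. z (inv_into {0..<card T} h t) * t)"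
    using re[of "\<lambda>t. z (inv_into {0..<card T} h t) * t"] by simp
  also have "\<dots> \<in> K" using ideal_gen_sub[of T] ideal_gen_ideal[of T] unfolding T(2) by (rule gen_sum_mem)
  finally show ?thesis .
qed


lemma ideal_colon: "is_ideal I \<Longrightarrow> is_ideal {y. \<forall>c\<in>C. c * y \<in> I}"
  unfolding is_ideal_def by (auto simp: distrib_left mult.left_commute)

lemma ideal_colon1: "is_ideal I \<Longrightarrow> is_ideal {y. c * y \<in> I}"
  using ideal_colon[of I "{c}"] by simp

lemma ideal_colon2: "is_ideal I \<Longrightarrow> is_ideal {x. \<forall>y\<in>Y. x * y \<in> I}"
  using ideal_colon[of I Y] by (simp add: mult.commute)

lemma mon_in_pow:
  assumes "finite S" "S \<subseteq> a" "is_ideal a"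
  shows "(\<Prod>s\<in>S. s ^ \<alpha> s) \<in> ideal_pow a (\<Sum>s\<in>S. \<alpha> s)"
  using assms
proof (induction S rule: finite_induct)
  case empty then show ?case by simp
next
  case (insert x F)
  then have "x ^ \<alpha> x \<in> ideal_pow a (\<alpha> x)" by (auto intro: elem_pow)
  then show ?case using insert by (simp add: ideal_pow_mult)
qed

lemma prod_upd:
  fixes S :: "'a::comm_ring_1 set"
  assumes "finite S" "s \<in> S"
  shows "(\<Prod>t\<in>S. t ^ ((\<alpha>(s := Suc (\<alpha> s))) t)) = s * (\<Prod>t\<in>S. t ^ \<alpha> t)"
proof -
  have "(\<Prod>t\<in>S. t ^ ((\<alpha>(s := Suc (\<alpha> s))) t)) = s ^ Suc (\<alpha> s) * (\<Prod>t\<in>S - {s}. t ^ ((\<alpha>(s := Suc (\<alpha> s))) t))"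
    by (subst prod.remove[OF assms]) simp
  also have "(\<Prod>t\<in>S - {s}. t ^ ((\<alpha>(s := Suc (\<alpha> s))) t)) = (\<Prod>t\<in>S - {s}. t ^ \<alpha> t)"
    by (rule prod.cong) auto
  also have "s ^ Suc (\<alpha> s) * (\<Prod>t\<in>S - {s}. t ^ \<alpha> t) = s * (s ^ \<alpha> s * (\<Prod>t\<in>S - {s}. t ^ \<alpha> t))"
    by (simp only: power_Suc mult.assoc)
  also have "s ^ \<alpha> s * (\<Prod>t\<in>S - {s}. t ^ \<alpha> t) = (\<Prod>t\<in>S. t ^ \<alpha> t)"
    using prod.remove[OF assms, symmetric] by simp
  finally show ?thesis .
qed

lemma sum_upd:
  assumes "finite S" "s \<in> S"
  shows "(\<Sum>t\<in>S. (\<alpha>(s := Suc (\<alpha> s))) t) = Suc (\<Sum>t\<in>S. \<alpha> t)"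
proof -
  have "(\<Sum>t\<in>S. (\<alpha>(s := Suc (\<alpha> s))) t) = Suc (\<alpha> s) + (\<Sum>t\<in>S - {s}. (\<alpha>(s := Suc (\<alpha> s))) t)"
    by (subst sum.remove[OF assms]) simp
  also have "(\<Sum>t\<in>S - {s}. (\<alpha>(s := Suc (\<alpha> s))) t) = (\<Sum>t\<in>S - {s}. \<alpha> t)"
    by (rule sum.cong) auto
  also have "Suc (\<alpha> s) + (\<Sum>t\<in>S - {s}. \<alpha> t) = Suc (\<Sum>t\<in>S. \<alpha> t)"
    using sum.remove[OF assms, of \<alpha>] by simp
  finally show ?thesis .
qed

definition monoms :: "'a::comm_ring_1 set \<Rightarrow> nat \<Rightarrow> 'a set" where
  "monoms S n = {\<Prod>s\<in>S. s ^ \<alpha> s | \<alpha>. (\<Sum>s\<in>S. \<alpha> s) = n}"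

lemma pow_sub_mon:
  fixes S :: "'a::comm_ring_1 set"
  assumes fin: "finite S"
  shows "ideal_pow (ideal_gen S) n \<subseteq> ideal_gen (monoms S n)"
proof (induction n)
  case 0
  have "(\<Prod>s\<in>S. s ^ (\<lambda>_. 0::nat) s) \<in> monoms S 0" unfolding monoms_def by fastforce
  then have "1 \<in> monoms S 0" by simp
  then have "1 \<in> ideal_gen (monoms S 0)" by (rule ideal_gen_in)
  then have "ideal_gen (monoms S 0) = UNIV" by (rule ideal_one[OF ideal_gen_ideal])
  then show ?case by simp
next
  case (Suc n)
  let ?G = "ideal_gen (monoms S (Suc n))"
  let ?I = "{x. \<forall>y\<in>ideal_gen (monoms S n). x * y \<in> ?G}"
  have "S \<subseteq> ?I"
  proof
    fix s assume s: "s \<in> S"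
    have "monoms S n \<subseteq> {y. s * y \<in> ?G}"
    proof
      fix y assume "y \<in> monoms S n"
      then obtain \<alpha> where y: "y = (\<Prod>t\<in>S. t ^ \<alpha> t)" "(\<Sum>t\<in>S. \<alpha> t) = n"
        unfolding monoms_def by blast
      have "s * y \<in> monoms S (Suc n)" unfolding monoms_def
        using prod_upd[OF fin s, of \<alpha>] sum_upd[OF fin s, of \<alpha>] y
        by (intro CollectI exI[of _ "\<alpha>(s := Suc (\<alpha> s))"]) simp
      then have "s * y \<in> ?G" by (rule ideal_gen_in)
      then show "y \<in> {y. s * y \<in> ?G}" by (simp only: mem_Collect_eq)
    qed
    then have "ideal_gen (monoms S n) \<subseteq> {y. s * y \<in> ?G}"
      by (rule ideal_gen_least[OF ideal_colon1[OF ideal_gen_ideal]])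
    then show "s \<in> ?I" by blast
  qed
  then have "ideal_gen S \<subseteq> ?I" by (rule ideal_gen_least[OF ideal_colon2[OF ideal_gen_ideal]])
  then have "{x * y |x y. x \<in> ideal_gen S \<and> y \<in> ideal_pow (ideal_gen S) n} \<subseteq> ?G"
    using Suc.IH by blast
  then show ?case by (simp only: ideal_pow.simps) (rule ideal_gen_least[OF ideal_gen_ideal])
qed

lemma mono_bound:
  fixes S :: "'a::comm_ring_1 set"
  assumes fin: "finite S" and q: "q \<ge> 1" and n: "n \<ge> (k + card S) * q"
  shows "ideal_pow (ideal_gen S) n \<subseteq> frob_pow (ideal_pow (ideal_gen S) k) q"
proof -
  let ?a = "ideal_gen S"
  have "monoms S n \<subseteq> frob_pow (ideal_pow ?a k) q"
  proof
    fix y assume "y \<in> monoms S n"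
    then obtain \<alpha> where y: "y = (\<Prod>t\<in>S. t ^ \<alpha> t)" and sa: "(\<Sum>t\<in>S. \<alpha> t) = n"
      unfolding monoms_def by blast
    define \<beta> where "\<beta> t = \<alpha> t div q" for t
    define r where "r t = \<alpha> t mod q" for t
    have "t ^ \<alpha> t = (t ^ \<beta> t) ^ q * t ^ r t" for t :: 'a
    proof -
      have "\<alpha> t = \<beta> t * q + r t" unfolding \<beta>_def r_def by simp
      then show ?thesis by (simp add: power_add power_mult)
    qed
    then have y2: "y = (\<Prod>t\<in>S. t ^ \<beta> t) ^ q * (\<Prod>t\<in>S. t ^ r t)"
      unfolding y by (simp add: prod.distrib prod_power_distrib)
    have "(\<Sum>t\<in>S. r t) \<le> (\<Sum>t\<in>S. q)"
      by (rule sum_mono) (use q in \<open>simp add: r_def less_imp_le\<close>)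
    then have rs: "(\<Sum>t\<in>S. r t) \<le> card S * q" by simp
    have "n = q * (\<Sum>t\<in>S. \<beta> t) + (\<Sum>t\<in>S. r t)"
      unfolding sa[symmetric] \<beta>_def r_def by (simp add: sum_distrib_left sum.distrib[symmetric] mult.commute)
    then have A: "(k + card S) * q \<le> q * (\<Sum>t\<in>S. \<beta> t) + (\<Sum>t\<in>S. r t)"
      using n by simp
    have B: "(k + card S) * q = q * k + q * card S" by (simp add: algebra_simps)
    have "q * k \<le> q * (\<Sum>t\<in>S. \<beta> t)" using A B rs mult.commute[of "card S" q] by linarith
    then have kb: "k \<le> (\<Sum>t\<in>S. \<beta> t)" using q by simp
    have "(\<Prod>t\<in>S. t ^ \<beta> t) \<in> ideal_pow ?a (\<Sum>t\<in>S. \<beta> t)"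
      by (rule mon_in_pow[OF fin ideal_gen_sub ideal_gen_ideal])
    then have "(\<Prod>t\<in>S. t ^ \<beta> t) \<in> ideal_pow ?a k" using ideal_pow_anti[OF kb] by blast
    then have "(\<Prod>t\<in>S. t ^ \<beta> t) ^ q \<in> frob_pow (ideal_pow ?a k) q" by (rule frob_pow_elem)
    then show "y \<in> frob_pow (ideal_pow ?a k) q" unfolding y2 by (rule ideal_mult2[OF frob_pow_ideal])
  qed
  then have "ideal_gen (monoms S n) \<subseteq> frob_pow (ideal_pow ?a k) q"
    by (rule ideal_gen_least[OF frob_pow_ideal])
  then show ?thesis using pow_sub_mon[OF fin] by blast
qed


definition NS :: "'a::comm_ring_1 set \<Rightarrow> 'a set \<Rightarrow> nat" where
  "NS a B = Sup {m. \<not> ideal_pow a m \<subseteq> B}"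

lemma nu_NS: "nu b a p e = NS a (frob_pow b (p ^ e))"
  unfolding nu_def NS_def ..

lemma bJ_NS: "bJ J a p e = NS a (J_e J p e)"
  unfolding bJ_def NS_def ..

lemma NS_fin: assumes "ideal_pow a N \<subseteq> B" shows "{m. \<not> ideal_pow a m \<subseteq> B} \<subseteq> {..<N}"
proof
  fix m assume m: "m \<in> {m. \<not> ideal_pow a m \<subseteq> B}"
  show "m \<in> {..<N}"
  proof (rule ccontr)
    assume "m \<notin> {..<N}"
    then have "N \<le> m" by simp
    then have "ideal_pow a m \<subseteq> ideal_pow a N" by (rule ideal_pow_anti)
    then show False using m assms by blast
  qed
qed

lemma NS_upper: assumes "ideal_pow a N \<subseteq> B" "\<not> ideal_pow a m \<subseteq> B" shows "m \<le> NS a B"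
proof -
  have "finite {m. \<not> ideal_pow a m \<subseteq> B}" using NS_fin[OF assms(1)] finite_subset by blast
  then have "bdd_above {m. \<not> ideal_pow a m \<subseteq> B}" by (rule bdd_above_finite)
  then show ?thesis unfolding NS_def using assms(2) by (intro cSup_upper) simp_all
qed

lemma NS_mem: assumes "ideal_pow a N \<subseteq> B" "\<not> ideal_pow a 0 \<subseteq> B"
  shows "\<not> ideal_pow a (NS a B) \<subseteq> B"
proof -
  let ?X = "{m. \<not> ideal_pow a m \<subseteq> B}"
  have "finite ?X" using NS_fin[OF assms(1)] finite_subset by blast
  moreover have "?X \<noteq> {}" using assms(2) by blast
  ultimately have "Sup ?X \<in> ?X" using cSup_eq_Max Max_in by metis
  then show ?thesis unfolding NS_def by blast
qed

lemma NS_le: assumes "ideal_pow a N \<subseteq> B" shows "NS a B \<le> N"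
proof (cases "ideal_pow a 0 \<subseteq> B")
  case True
  then have "{m. \<not> ideal_pow a m \<subseteq> B} = {}" using ideal_pow_anti[of 0 _ a] by blast
  then show ?thesis unfolding NS_def by simp
next
  case False
  then have "\<not> ideal_pow a (NS a B) \<subseteq> B" using NS_mem[OF assms] by blast
  then show ?thesis using NS_fin[OF assms] by fastforce
qed

lemma NS_Suc: assumes "ideal_pow a N \<subseteq> B" shows "ideal_pow a (Suc (NS a B)) \<subseteq> B"
  using NS_upper[OF assms, of "Suc (NS a B)"] by auto

lemma NS_anti: assumes "ideal_pow a N \<subseteq> B" "B \<subseteq> B'" shows "NS a B' \<le> NS a B"
proof (cases "ideal_pow a 0 \<subseteq> B'")
  case True
  then have "{m. \<not> ideal_pow a m \<subseteq> B'} = {}" using ideal_pow_anti[of 0 _ a] by blast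
  then show ?thesis unfolding NS_def by simp
next
  case False
  have N': "ideal_pow a N \<subseteq> B'" using assms by blast
  have "\<not> ideal_pow a (NS a B') \<subseteq> B'" using NS_mem[OF N' False] .
  then have "\<not> ideal_pow a (NS a B') \<subseteq> B" using assms(2) by blast
  then show ?thesis using NS_upper[OF assms(1)] by blast
qed


locale fctx =
  fixes a J S :: "'a::comm_ring_1 set" and P :: nat
  assumes pr: "prime P" and pC: "CHAR('a) = P" and noeth: "noetherian_ring TYPE('a)"
    and fp: "F_pure TYPE('a) P" and aI: "is_ideal a" and JI: "is_ideal J"
    and rad: "a \<subseteq> radical J" and finS: "finite S" and aS: "a = ideal_gen S"
begin

lemma prC: "prime CHAR('a)" using pr pC by simp

lemma comp: "frob_pow (frob_pow (B::'a set) (P ^ e)) (P ^ f) = frob_pow B (P ^ (e + f))"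
  using frob_pow_comp[OF prC] unfolding pC .

lemma fgen: "frob_pow (ideal_gen (S'::'a set)) (P ^ e) = ideal_gen {s ^ (P ^ e) | s. s \<in> S'}"
  using frob_gen_eq[OF prC] unfolding pC .

lemma fclos: "is_ideal (K::'a set) \<Longrightarrow> x ^ P \<in> frob_pow K P \<Longrightarrow> x \<in> K"
  using frob_closure[OF prC noeth] fp unfolding pC by blast

lemma Jfs: "frob_pow (J_e J P e) (P ^ f) \<subseteq> J_e J P (e + f)"
  using J_e_frob_sub[OF prC JI] unfolding pC .

definition good :: "'a set \<Rightarrow> bool" where
  "good B \<longleftrightarrow> (\<forall>e. \<exists>N. ideal_pow a N \<subseteq> frob_pow B (P ^ e))"

lemma P2: "P \<ge> 2" using pr prime_ge_2_nat by blast

lemma Pq: "P ^ e \<ge> 1" using P2 by simp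

lemma mb: "n \<ge> (k + card S) * P ^ e \<Longrightarrow> ideal_pow a n \<subseteq> frob_pow (ideal_pow a k) (P ^ e)"
  unfolding aS by (rule mono_bound[OF finS Pq])

lemma rad_bound: "\<exists>K. ideal_pow a K \<subseteq> J"
proof -
  have "\<forall>s\<in>S. \<exists>n. s ^ n \<in> J"
  proof
    fix s assume "s \<in> S"
    then have "s \<in> a" unfolding aS by (rule ideal_gen_in)
    then show "\<exists>n. s ^ n \<in> J" using rad unfolding radical_def by blast
  qed
  then obtain f where f: "\<forall>s\<in>S. s ^ f s \<in> J" by metis
  define M where "M = (\<Sum>s\<in>S. f s)"
  have "M < 2 ^ M" by (rule less_exp)
  also have "(2::nat) ^ M \<le> P ^ M" using P2 by (rule power_mono) simp
  finally have MP: "M < P ^ M" .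
  have sJ: "s ^ (P ^ M) \<in> J" if s: "s \<in> S" for s
  proof -
    have "M = f s + (\<Sum>t\<in>S - {s}. f t)" unfolding M_def by (rule sum.remove[OF finS s])
    then have "f s \<le> M" by simp
    then have "P ^ M = f s + (P ^ M - f s)" using MP by simp
    then have "s ^ (P ^ M) = s ^ f s * s ^ (P ^ M - f s)" by (metis power_add)
    then show ?thesis using f s ideal_mult2[OF JI] by simp
  qed
  have "ideal_pow a ((1 + card S) * P ^ M) \<subseteq> frob_pow (ideal_pow a 1) (P ^ M)" by (rule mb) simp
  also have "ideal_pow a 1 = ideal_gen S" using ideal_pow_1[OF aI] aS by simp
  also have "frob_pow (ideal_gen S) (P ^ M) = ideal_gen {s ^ (P ^ M) | s. s \<in> S}"
    by (rule fgen)
  also have "\<dots> \<subseteq> J" using sJ by (intro ideal_gen_least[OF JI]) blast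
  finally show ?thesis by blast
qed

lemma good_J: "good J"
  unfolding good_def
proof
  fix e
  obtain K where K: "ideal_pow a K \<subseteq> J" using rad_bound by blast
  have "ideal_pow a ((K + card S) * P ^ e) \<subseteq> frob_pow (ideal_pow a K) (P ^ e)" by (rule mb) simp
  also have "\<dots> \<subseteq> frob_pow J (P ^ e)" using K by (rule frob_pow_mono)
  finally show "\<exists>N. ideal_pow a N \<subseteq> frob_pow J (P ^ e)" by blast
qed

lemma good_N: "good (B::'a set) \<Longrightarrow> \<exists>N. ideal_pow a N \<subseteq> frob_pow B (P ^ e)"
  unfolding good_def by blast

lemma good_mono: assumes g: "good (B::'a set)" and sub: "B \<subseteq> B'" shows "good B'"
  unfolding good_def
proof
  fix e
  obtain N where "ideal_pow a N \<subseteq> frob_pow B (P ^ e)" using good_N[OF g] by blast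
  also have "\<dots> \<subseteq> frob_pow B' (P ^ e)" using sub by (rule frob_pow_mono)
  finally show "\<exists>N. ideal_pow a N \<subseteq> frob_pow B' (P ^ e)" by (rule exI)
qed

lemma good_frob: assumes g: "good (B::'a set)" shows "good (frob_pow B (P ^ e))"
  unfolding good_def
proof
  fix f
  obtain N where "ideal_pow a N \<subseteq> frob_pow B (P ^ (e + f))" using good_N[OF g] by blast
  then show "\<exists>N. ideal_pow a N \<subseteq> frob_pow (frob_pow B (P ^ e)) (P ^ f)" unfolding comp by (rule exI)
qed

lemma good_Je: "good (J_e J P e)"
  using good_mono[OF good_frob[OF good_J] frob_sub_J_e[OF JI]] .

lemma nu_step: assumes g: "good (B::'a set)" shows "P * nu B a P e \<le> nu B a P (Suc e)"
proof -
  let ?X = "frob_pow B (P ^ e)"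
  let ?Y = "frob_pow B (P ^ Suc e)"
  obtain N where N: "ideal_pow a N \<subseteq> ?X" using good_N[OF g] by blast
  obtain N' where N': "ideal_pow a N' \<subseteq> ?Y" using good_N[OF g] by blast
  show ?thesis
  proof (cases "ideal_pow a 0 \<subseteq> ?X")
    case True
    then have "NS a ?X \<le> 0" by (rule NS_le)
    then show ?thesis unfolding nu_NS by simp
  next
    case False
    have "\<not> ideal_pow a (NS a ?X) \<subseteq> ?X" using NS_mem[OF N False] .
    then obtain x where x: "x \<in> ideal_pow a (NS a ?X)" "x \<notin> ?X" by blast
    have xp: "x ^ P \<in> ideal_pow a (P * NS a ?X)" using x(1) by (rule ideal_pow_power)
    have Y: "?Y = frob_pow ?X P" using comp[of B e 1] by simp
    have "\<not> ideal_pow a (P * NS a ?X) \<subseteq> ?Y"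
    proof
      assume "ideal_pow a (P * NS a ?X) \<subseteq> ?Y"
      then have "x ^ P \<in> frob_pow ?X P" using xp Y by blast
      then have "x \<in> ?X" by (rule fclos[OF frob_pow_ideal])
      then show False using x(2) by blast
    qed
    then have "P * NS a ?X \<le> NS a ?Y" by (rule NS_upper[OF N'])
    then show ?thesis unfolding nu_NS .
  qed
qed

lemma nu_up: assumes g: "good (B::'a set)" shows "nu B a P e \<le> (nu B a P 0 + 1 + card S) * P ^ e"
proof -
  obtain N where N: "ideal_pow a N \<subseteq> frob_pow B (P ^ 0)" using good_N[OF g] by blast
  let ?v = "NS a (frob_pow B (P ^ 0))"
  have "ideal_pow a ((Suc ?v + card S) * P ^ e) \<subseteq> frob_pow (ideal_pow a (Suc ?v)) (P ^ e)"
    by (rule mb) simp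
  also have "\<dots> \<subseteq> frob_pow (frob_pow B (P ^ 0)) (P ^ e)"
    by (rule frob_pow_mono[OF NS_Suc[OF N]])
  also have "\<dots> = frob_pow B (P ^ e)" using comp[of B 0 e] by simp
  finally have "NS a (frob_pow B (P ^ e)) \<le> (Suc ?v + card S) * P ^ e" by (rule NS_le)
  then show ?thesis unfolding nu_NS by simp
qed

lemma nu_anti: assumes g: "good (B::'a set)" and sub: "B \<subseteq> B'" shows "nu B' a P e \<le> nu B a P e"
proof -
  obtain N where N: "ideal_pow a N \<subseteq> frob_pow B (P ^ e)" using good_N[OF g] by blast
  show ?thesis unfolding nu_NS using NS_anti[OF N frob_pow_mono[OF sub]] .
qed

definition sq :: "'a set \<Rightarrow> nat \<Rightarrow> real" where
  "sq B e = real (nu B a P e) / real P ^ e"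

lemma Ppos: "real P ^ e > 0" using P2 by simp

lemma conv:
  assumes g: "good B"
  shows "sq B \<longlonglongrightarrow> fthr B a P" "\<And>e. sq B e \<le> fthr B a P"
    "fthr B a P \<le> real (nu B a P 0) + 1 + card S" "real (nu B a P 0) \<le> fthr B a P"
proof -
  have inc: "incseq (sq B)"
  proof (rule incseq_SucI)
    fix e
    have "real (P * nu B a P e) \<le> real (nu B a P (Suc e))"
      using nu_step[OF g, of e] by (rule of_nat_mono)
    then have "real P * real (nu B a P e) \<le> real (nu B a P (Suc e))" by (simp only: of_nat_mult)
    note h = this
    have "real P \<noteq> 0" using P2 by simp
    then have "sq B e = real P * real (nu B a P e) / real P ^ Suc e" unfolding sq_def by simp
    also have "\<dots> \<le> real (nu B a P (Suc e)) / real P ^ Suc e"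
      by (rule divide_right_mono[OF h]) (use Ppos[of "Suc e"] in simp)
    also have "\<dots> = sq B (Suc e)" unfolding sq_def ..
    finally show "sq B e \<le> sq B (Suc e)" .
  qed
  have bd: "\<forall>e. sq B e \<le> real (nu B a P 0) + 1 + card S"
  proof
    fix e
    have "real (nu B a P e) \<le> real ((nu B a P 0 + 1 + card S) * P ^ e)"
      using nu_up[OF g, of e] by (rule of_nat_mono)
    then have "real (nu B a P e) \<le> (real (nu B a P 0) + 1 + card S) * real P ^ e" by (simp add: algebra_simps)
    then show "sq B e \<le> real (nu B a P 0) + 1 + card S"
      unfolding sq_def using Ppos[of e] by (simp add: divide_le_eq)
  qed
  obtain L where L: "sq B \<longlonglongrightarrow> L" "\<forall>i. sq B i \<le> L" using incseq_convergent[OF inc bd] by blast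
  have fL: "fthr B a P = L" unfolding fthr_def using L(1) unfolding sq_def by (rule limI)
  show "sq B \<longlonglongrightarrow> fthr B a P" using L(1) fL by simp
  show "\<And>e. sq B e \<le> fthr B a P" using L(2) fL by simp
  show "fthr B a P \<le> real (nu B a P 0) + 1 + card S"
    unfolding fL using L(1) by (rule LIMSEQ_le_const2) (use bd in blast)
  have "sq B 0 = real (nu B a P 0)" unfolding sq_def by simp
  then show "real (nu B a P 0) \<le> fthr B a P" using L(2) fL by metis
qed

lemma fthr_anti: assumes g: "good B" and sub: "B \<subseteq> B'" shows "fthr B' a P \<le> fthr B a P"
proof (rule LIMSEQ_le[OF conv(1)[OF good_mono[OF g sub]] conv(1)[OF g]])
  show "\<exists>N. \<forall>n\<ge>N. sq B' n \<le> sq B n"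
  proof (intro exI allI impI)
    fix n :: nat
    have "real (nu B' a P n) \<le> real (nu B a P n)" using nu_anti[OF g sub] by (rule of_nat_mono)
    then show "sq B' n \<le> sq B n" unfolding sq_def
      by (rule divide_right_mono) (use Ppos[of n] in simp)
  qed
qed

lemma fthr_frob: assumes g: "good B" shows "fthr (frob_pow B (P ^ e)) a P = real P ^ e * fthr B a P"
proof -
  have "(\<lambda>f. sq B (f + e)) \<longlonglongrightarrow> fthr B a P" by (rule LIMSEQ_ignore_initial_segment[OF conv(1)[OF g]])
  then have "(\<lambda>f. real P ^ e * sq B (f + e)) \<longlonglongrightarrow> real P ^ e * fthr B a P" by (rule tendsto_mult_left)
  moreover have "real P ^ e * sq B (f + e) = sq (frob_pow B (P ^ e)) f" for f
  proof -
    have "nu (frob_pow B (P ^ e)) a P f = nu B a P (f + e)"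
      unfolding nu_NS comp by (simp add: add.commute)
    moreover have "real P ^ (f + e) = real P ^ f * real P ^ e" by (simp add: power_add)
    ultimately show ?thesis unfolding sq_def using Ppos[of e] Ppos[of f] by (simp add: add.commute)
  qed
  ultimately have "sq (frob_pow B (P ^ e)) \<longlonglongrightarrow> real P ^ e * fthr B a P" by simp
  then show ?thesis using conv(1)[OF good_frob[OF g]] LIMSEQ_unique by blast
qed

definition beta :: "nat \<Rightarrow> real" where "beta e = real (bJ J a P e) / real P ^ e"
definition gam :: "nat \<Rightarrow> real" where "gam e = fthr (J_e J P e) a P / real P ^ e"

lemma bJ_nu: "bJ J a P e = nu (J_e J P e) a P 0"
  unfolding bJ_NS nu_NS using frob_pow_1[OF J_e_ideal[OF JI]] by simp

lemma beta_gam: "beta e \<le> gam e" "gam e \<le> beta e + (1 + card S) / real P ^ e"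
proof -
  have c3: "fthr (J_e J P e) a P \<le> real (bJ J a P e) + 1 + card S" unfolding bJ_nu by (rule conv(3)[OF good_Je])
  have c4: "real (bJ J a P e) \<le> fthr (J_e J P e) a P" unfolding bJ_nu by (rule conv(4)[OF good_Je])
  show "beta e \<le> gam e" unfolding beta_def gam_def using c4 by (rule divide_right_mono) (use Ppos[of e] in simp)
  have "gam e \<le> (real (bJ J a P e) + 1 + card S) / real P ^ e"
    unfolding gam_def using c3 by (rule divide_right_mono) (use Ppos[of e] in simp)
  also have "\<dots> = beta e + (1 + card S) / real P ^ e" unfolding beta_def by (simp add: add_divide_distrib)
  finally show "gam e \<le> beta e + (1 + card S) / real P ^ e" .
qed

lemma gam_dec: "decseq gam"
proof (rule decseq_SucI)
  fix e
  have "fthr (J_e J P (e + 1)) a P \<le> fthr (frob_pow (J_e J P e) (P ^ 1)) a P"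
    by (rule fthr_anti[OF good_frob[OF good_Je] Jfs])
  also have "\<dots> = real P * fthr (J_e J P e) a P" using fthr_frob[OF good_Je[of e], of 1] by simp
  finally have h: "fthr (J_e J P (Suc e)) a P \<le> real P * fthr (J_e J P e) a P" by simp
  have "gam (Suc e) \<le> real P * fthr (J_e J P e) a P / real P ^ Suc e"
    unfolding gam_def using h by (rule divide_right_mono) (use Ppos[of "Suc e"] in simp)
  also have "\<dots> = gam e" unfolding gam_def using P2 by simp
  finally show "gam (Suc e) \<le> gam e" .
qed

lemma gam_nonneg: "gam e \<ge> 0"
proof -
  have "0 \<le> beta e" unfolding beta_def by simp
  then show ?thesis using beta_gam(1)[of e] by linarith
qed

lemma limits: "\<exists>L. gam \<longlonglongrightarrow> L \<and> beta \<longlonglongrightarrow> L \<and> ct J a P = L"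
proof -
  obtain L where L: "gam \<longlonglongrightarrow> L" using decseq_convergent[OF gam_dec, of 0] gam_nonneg by blast
  have P1: "1 < real P" using P2 by simp
  have "(\<lambda>e. gam e - (1 + card S) / real P ^ e) \<longlonglongrightarrow> L - 0"
    by (rule tendsto_diff[OF L LIMSEQ_divide_realpow_zero[OF P1]])
  then have lo: "(\<lambda>e. gam e - (1 + card S) / real P ^ e) \<longlonglongrightarrow> L" by simp
  have "beta \<longlonglongrightarrow> L"
  proof (rule tendsto_sandwich[OF _ _ lo L])
    show "\<forall>\<^sub>F n in sequentially. gam n - (1 + card S) / real P ^ n \<le> beta n"
      using beta_gam(2) by (intro always_eventually allI) (simp add: algebra_simps)
    show "\<forall>\<^sub>F n in sequentially. beta n \<le> gam n"
      using beta_gam(1) by (intro always_eventually allI) simp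
  qed
  moreover have "ct J a P = L" unfolding ct_def using \<open>beta \<longlonglongrightarrow> L\<close> unfolding beta_def by (rule limI)
  ultimately show ?thesis using L by blast
qed

lemma ct_le: "real P ^ e * ct J a P \<le> fthr (J_e J P e) a P"
proof -
  obtain L where L: "beta \<longlonglongrightarrow> L" "ct J a P = L" using limits by blast
  have "(\<lambda>f. beta (f + e)) \<longlonglongrightarrow> L" by (rule LIMSEQ_ignore_initial_segment[OF L(1)])
  then have lim1: "(\<lambda>f. real P ^ e * beta (f + e)) \<longlonglongrightarrow> real P ^ e * L" by (rule tendsto_mult_left)
  have le: "real P ^ e * beta (f + e) \<le> sq (J_e J P e) f" for f
  proof -
    obtain N where N: "ideal_pow a N \<subseteq> frob_pow (J_e J P e) (P ^ f)" using good_N[OF good_Je] by blast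
    have "NS a (J_e J P (e + f)) \<le> NS a (frob_pow (J_e J P e) (P ^ f))" by (rule NS_anti[OF N Jfs])
    then have "bJ J a P (f + e) \<le> nu (J_e J P e) a P f" unfolding bJ_NS nu_NS by (simp add: add.commute)
    then have h: "real (bJ J a P (f + e)) \<le> real (nu (J_e J P e) a P f)" by (rule of_nat_mono)
    have "real P ^ e * beta (f + e) = real (bJ J a P (f + e)) / real P ^ f"
      unfolding beta_def using Ppos[of e] by (simp add: power_add)
    also have "\<dots> \<le> sq (J_e J P e) f" unfolding sq_def using h by (rule divide_right_mono) (use Ppos[of f] in simp)
    finally show ?thesis .
  qed
  have "real P ^ e * L \<le> fthr (J_e J P e) a P"
    by (rule LIMSEQ_le[OF lim1 conv(1)[OF good_Je]]) (use le in blast)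
  then show ?thesis using L(2) by simp
qed

lemma Je_le: "fthr (J_e J P e) a P \<le> real P ^ e * fthr J a P"
  using fthr_anti[OF good_frob[OF good_J] frob_sub_J_e[OF JI]] fthr_frob[OF good_J] by simp

lemma main: "ct J a P = fthr J a P \<longleftrightarrow> (\<forall>e. fthr (J_e J P e) a P = fthr (frob_pow J (P ^ e)) a P)"
proof
  assume h: "ct J a P = fthr J a P"
  show "\<forall>e. fthr (J_e J P e) a P = fthr (frob_pow J (P ^ e)) a P"
  proof
    fix e
    have "fthr (J_e J P e) a P = real P ^ e * fthr J a P" using ct_le[of e] Je_le[of e] h by simp
    then show "fthr (J_e J P e) a P = fthr (frob_pow J (P ^ e)) a P" using fthr_frob[OF good_J] by simp
  qed
next
  assume h: "\<forall>e. fthr (J_e J P e) a P = fthr (frob_pow J (P ^ e)) a P"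
  have "gam e = fthr J a P" for e
    unfolding gam_def using h fthr_frob[OF good_J, of e] Ppos[of e] by simp
  then have "gam = (\<lambda>_. fthr J a P)" by auto
  then have "gam \<longlonglongrightarrow> fthr J a P" by simp
  moreover obtain L where "gam \<longlonglongrightarrow> L" "ct J a P = L" using limits by blast
  ultimately show "ct J a P = fthr J a P" using LIMSEQ_unique by metis
qed

end


theorem mainTheorem18:
  fixes a J :: "'a::comm_ring_1 set" and p :: nat
  assumes "prime p" and "CHAR('a) = p"
    and "noetherian_ring TYPE('a)"
    and "F_finite TYPE('a) p" and "F_pure TYPE('a) p"
    and "is_ideal a" and "is_ideal J" and "a \<subseteq> radical J"
  shows "ct J a p = fthr J a p \<longleftrightarrow>
         (\<forall>e::nat. fthr (J_e J p e) a p = fthr (frob_pow J (p ^ e)) a p)"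
proof -
  obtain S where S: "finite S" "a = ideal_gen S"
    using assms(3,6) unfolding noetherian_ring_def by blast
  interpret fctx a J S p
    by (unfold_locales) (use assms S in auto)
  show ?thesis by (rule main)
qed

end
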